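(* In the setting described in the context, the discrete Lagrange multiplier $\sigma_h\in V_{nc}$ satisfies $$\sigma_h(z)\le 0\quad\text{for all } z\in\mathcal{M}_h^i,\qquad \sigma_h(z)=0\quad\text{for all } z\in\mathcal{M}_h^i \text{ with } u_h(z)>\chi(z).$$
   Context: $\Omega\subset\mathbb{R}^d$ ($1\le d\le3$) is a bounded polyhedral domain, $f\in L^2(\Omega)$, and the obstacle $\chi\in C(\bar\Omega)\cap H^1(\Omega)$ satisfies $\chi\le 0$ on $\partial\Omega$. $\mathcal{T}_h$ is a conforming shape-regular triangulation of $\Omega$ into closed triangles; $|T|$ is the area of $T$; $\mathcal{M}_h$ is the set of all edge midpoints, $\mathcal{M}_h^i$ the set of midpoints of interior edges, $\mathcal{V}_h^i$ the set of interior vertices, $\mathcal{M}_T$ the set of the three edge midpoints of $T$. $V_h=\{v\in H^1_0(\Omega): v|_T\in\mathbb{P}_2(T)\ \forall T\}$ with nodal basis $\{\psi_z: z\in\mathcal{V}_h^i\cup\mathcal{M}_h^i\}$. $V_{nc}$ is the Crouzeix–Raviart space (piecewise affine functions continuous at interior edge midpoints and vanishing at boundary edge midpoints). For $v\in V_{nc}$, $\Pi_hv:=\sum_{z\in\mathcal{M}_h^i}v(z)\psi_z\in V_h$. Let $a(v,w)=(\nabla v,\nabla w)$ (with $(\cdot,\cdot)$ the $L^2(\Omega)$ inner product). Let $\mathcal{K}_h=\{v_h\in V_h: v_h(z)\ge\chi(z)\ \forall z\in\mathcal{M}_h\}$ and let $u_h\in\mathcal{K}_h$ be the unique solution of $a(u_h,v_h-u_h)\ge(f,v_h-u_h)$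 for all $v_h\in\mathcal{K}_h$. Define the inner product on $V_{nc}$ by $\langle w,v\rangle_h=\sum_{T\in\mathcal{T}_h}\frac{|T|}{3}\sum_{z\in\mathcal{M}_T}w(z)v(z)$, and let $\sigma_h\in V_{nc}$ be defined by $\langle\sigma_h,v_h\rangle_h=(f,\Pi_hv_h)-a(u_h,\Pi_hv_h)$ for all $v_h\in V_{nc}$. *)

theory Defs
  imports "HOL-Analysis.Analysis"
begin

type_synonym pt = "real^2"

text \<open>A triangle is represented by its set of three (affinely independent) vertices K;
  the closed triangle itself is convex hull K.\<close>

definition is_triangle :: "pt set \<Rightarrow> bool" where
  "is_triangle K \<longleftrightarrow> card K = 3 \<and> \<not> affine_dependent K"

definition conforming_triangulation :: "pt set set \<Rightarrow> pt set \<Rightarrow> bool" where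
  "conforming_triangulation Th Om \<longleftrightarrow>
     finite Th \<and> Th \<noteq> {} \<and> (\<forall>K\<in>Th. is_triangle K) \<and>
     (\<forall>K1\<in>Th. \<forall>K2\<in>Th. K1 \<noteq> K2 \<longrightarrow>
        convex hull K1 \<inter> convex hull K2 = convex hull (K1 \<inter> K2)) \<and>
     Om = interior (\<Union>K\<in>Th. convex hull K)"

text \<open>Edge midpoints of a triangle (M_T), all edge midpoints (M_h), interior ones (M_h^i),
  all vertices.\<close>

definition mids :: "pt set \<Rightarrow> pt set" where
  "mids K = {midpoint a b | a b. a \<in> K \<and> b \<in> K \<and> a \<noteq> b}"

definition all_mids :: "pt set set \<Rightarrow> pt set" where
  "all_mids Th = (\<Union>K\<in>Th. mids K)"

definition int_mids :: "pt set set \<Rightarrow> pt set \<Rightarrow> pt set" where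
  "int_mids Th Om = {z \<in> all_mids Th. z \<in> Om}"

definition all_verts :: "pt set set \<Rightarrow> pt set" where
  "all_verts Th = \<Union> Th"

definition is_P2_on :: "pt set \<Rightarrow> (pt \<Rightarrow> real) \<Rightarrow> bool" where
  "is_P2_on S v \<longleftrightarrow> (\<exists>c0 c1 c2 c11 c12 c22. \<forall>x\<in>S.
      v x = c0 + c1 * x$1 + c2 * x$2 + c11 * (x$1)^2 + c12 * (x$1 * x$2) + c22 * (x$2)^2)"

text \<open>V_h: continuous piecewise P2 functions vanishing on the boundary (extended by zero
  outside Omega); this is exactly the set of piecewise P2 functions in H^1_0(Omega).\<close>

definition Vh :: "pt set set \<Rightarrow> pt set \<Rightarrow> (pt \<Rightarrow> real) set" where
  "Vh Th Om = {v. continuous_on UNIV v \<and> (\<forall>x. x \<notin> Om \<longrightarrow> v x = 0) \<and>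
                  (\<forall>K\<in>Th. is_P2_on (convex hull K) v)}"

definition psi :: "pt set set \<Rightarrow> pt set \<Rightarrow> pt \<Rightarrow> (pt \<Rightarrow> real)" where
  "psi Th Om z = (THE p. p \<in> Vh Th Om \<and> p z = 1 \<and>
        (\<forall>y \<in> all_verts Th \<union> all_mids Th. y \<noteq> z \<longrightarrow> p y = 0))"

text \<open>Crouzeix-Raviart functions, represented elementwise: v K is the affine piece on the
  triangle K.\<close>

definition Vnc :: "pt set set \<Rightarrow> pt set \<Rightarrow> (pt set \<Rightarrow> pt \<Rightarrow> real) set" where
  "Vnc Th Om = {v. (\<forall>K\<in>Th. \<exists>a b. \<forall>x\<in>convex hull K. v K x = inner a x + b) \<and>
     (\<forall>K1\<in>Th. \<forall>K2\<in>Th. \<forall>z. z \<in> mids K1 \<and> z \<in> mids K2 \<longrightarrow> v K1 z = v K2 z) \<and>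
     (\<forall>K\<in>Th. \<forall>z\<in>mids K. z \<notin> Om \<longrightarrow> v K z = 0)}"

text \<open>Value of a CR function at an edge midpoint (well defined by continuity there).\<close>

definition ncval :: "pt set set \<Rightarrow> (pt set \<Rightarrow> pt \<Rightarrow> real) \<Rightarrow> pt \<Rightarrow> real" where
  "ncval Th v z = v (SOME K. K \<in> Th \<and> z \<in> mids K) z"

definition Pi_h :: "pt set set \<Rightarrow> pt set \<Rightarrow> (pt set \<Rightarrow> pt \<Rightarrow> real) \<Rightarrow> pt \<Rightarrow> real" where
  "Pi_h Th Om v = (\<lambda>x. \<Sum>z\<in>int_mids Th Om. ncval Th v z * psi Th Om z x)"

definition ip_h :: "pt set set \<Rightarrow> (pt set \<Rightarrow> pt \<Rightarrow> real) \<Rightarrow> (pt set \<Rightarrow> pt \<Rightarrow> real) \<Rightarrow> real" where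
  "ip_h Th w v = (\<Sum>K\<in>Th. measure lebesgue (convex hull K) / 3 * (\<Sum>z\<in>mids K. w K z * v K z))"

text \<open>grad v . grad w (classical gradient; defined a.e. for piecewise polynomials).\<close>

definition grad_inner :: "(pt \<Rightarrow> real) \<Rightarrow> (pt \<Rightarrow> real) \<Rightarrow> pt \<Rightarrow> real" where
  "grad_inner v w x = (\<Sum>b\<in>Basis. frechet_derivative v (at x) b * frechet_derivative w (at x) b)"

definition bilin_a :: "pt set \<Rightarrow> (pt \<Rightarrow> real) \<Rightarrow> (pt \<Rightarrow> real) \<Rightarrow> real" where
  "bilin_a Om v w = integral Om (grad_inner v w)"

definition L2ip :: "pt set \<Rightarrow> (pt \<Rightarrow> real) \<Rightarrow> (pt \<Rightarrow> real) \<Rightarrow> real" where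
  "L2ip Om f g = integral\<^sup>L (lebesgue_on Om) (\<lambda>x. f x * g x)"

definition in_L2 :: "pt set \<Rightarrow> (pt \<Rightarrow> real) \<Rightarrow> bool" where
  "in_L2 Om g \<longleftrightarrow> g \<in> borel_measurable (lebesgue_on Om) \<and>
                   integrable (lebesgue_on Om) (\<lambda>x. (g x)^2)"

definition test_fun :: "pt set \<Rightarrow> (pt \<Rightarrow> real) \<Rightarrow> bool" where
  "test_fun Om phi \<longleftrightarrow> (\<forall>x. phi differentiable (at x)) \<and>
     (\<forall>b\<in>Basis. continuous_on UNIV (\<lambda>x. frechet_derivative phi (at x) b)) \<and>
     compact (closure {x. phi x \<noteq> 0}) \<and> closure {x. phi x \<noteq> 0} \<subseteq> Om"

definition in_H1 :: "pt set \<Rightarrow> (pt \<Rightarrow> real) \<Rightarrow> bool" where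
  "in_H1 Om g \<longleftrightarrow> in_L2 Om g \<and>
     (\<forall>b\<in>Basis. \<exists>gb. in_L2 Om gb \<and>
        (\<forall>phi. test_fun Om phi \<longrightarrow>
           integral\<^sup>L (lebesgue_on Om) (\<lambda>x. g x * frechet_derivative phi (at x) b)
           = - integral\<^sup>L (lebesgue_on Om) (\<lambda>x. gb x * phi x)))"

definition Kh :: "pt set set \<Rightarrow> pt set \<Rightarrow> (pt \<Rightarrow> real) \<Rightarrow> (pt \<Rightarrow> real) set" where
  "Kh Th Om chi = {v \<in> Vh Th Om. \<forall>z\<in>all_mids Th. v z \<ge> chi z}"

end

theory Submission
  imports Defs
begin


definition det2 :: "pt \<Rightarrow> pt \<Rightarrow> real" where "det2 u v = u$1 * v$2 - u$2 * v$1"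
definition bary :: "pt \<Rightarrow> pt \<Rightarrow> pt \<Rightarrow> pt \<Rightarrow> real" where
  "bary a b c x = det2 (b - x) (c - x) / det2 (b - a) (c - a)"

definition affine_fun :: "(pt \<Rightarrow> real) \<Rightarrow> bool" where
  "affine_fun f \<longleftrightarrow> (\<exists>w \<beta>. \<forall>x. f x = inner w x + \<beta>)"

lemma inner2: "inner (u::pt) v = u$1 * v$1 + u$2 * v$2"
  by (simp add: inner_vec_def sum_2)

lemma bary_affine: "affine_fun (bary a b c)"
proof -
  define D where "D = det2 (b - a) (c - a)"
  have e: "det2 (b - x) (c - x) = (b$1*c$2 - b$2*c$1) + ((b$2 - c$2) * x$1 + (c$1 - b$1) * x$2)" for x
    by (simp add: det2_def algebra_simps)
  show ?thesis unfolding affine_fun_def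
    apply (rule exI[of _ "vector [(b$2 - c$2)/D, (c$1 - b$1)/D]"])
    apply (rule exI[of _ "(b$1*c$2 - b$2*c$1)/D"])
    unfolding bary_def
    unfolding D_def[symmetric]
    unfolding e
    apply (simp add: inner2 add_divide_distrib)
    done
qed

lemma affine_fun_const: "affine_fun (\<lambda>x. c)"
  unfolding affine_fun_def by (rule exI[of _ 0]) simp
lemma affine_fun_add: "affine_fun f \<Longrightarrow> affine_fun g \<Longrightarrow> affine_fun (\<lambda>x. f x + g x)"
  unfolding affine_fun_def by (metis (no_types) inner_add_left add.assoc add.left_commute)
lemma affine_fun_cmul: "affine_fun f \<Longrightarrow> affine_fun (\<lambda>x. c * f x)"
  unfolding affine_fun_def
  by (metis (no_types) distrib_left inner_scaleR_left scaleR_conv_of_real of_real_def mult.commute)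
lemma affine_fun_sum: "finite S \<Longrightarrow> (\<And>i. i \<in> S \<Longrightarrow> affine_fun (f i)) \<Longrightarrow> affine_fun (\<lambda>x. \<Sum>i\<in>S. f i x)"
  by (induction S rule: finite_induct) (auto intro: affine_fun_add affine_fun_const)
lemma affine_fun_cont: "affine_fun f \<Longrightarrow> continuous_on A f"
  unfolding affine_fun_def by (auto intro!: continuous_intros)
lemma affine_fun_combo:
  assumes "affine_fun f" "finite S" "sum u S = 1"
  shows "f (\<Sum>s\<in>S. u s *\<^sub>R s) = (\<Sum>s\<in>S. u s * f s)"
proof -
  obtain w \<beta> where f: "\<And>x. f x = inner w x + \<beta>" using assms(1) unfolding affine_fun_def by blast
  have "(\<Sum>s\<in>S. u s * f s) = (\<Sum>s\<in>S. u s * inner w s) + (\<Sum>s\<in>S. u s) * \<beta>"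
    by (simp add: f distrib_left sum.distrib sum_distrib_right)
  then show ?thesis using assms(3) by (simp add: f inner_sum_right)
qed
lemma affine_fun_midpoint: "affine_fun f \<Longrightarrow> f (midpoint p q) = (f p + f q) / 2"
  unfolding affine_fun_def midpoint_def
  by (auto simp: inner_add_right field_simps)

lemma det_rot1: "det2 (c - b) (a - b) = det2 (b - a) (c - a)" by (simp add: det2_def algebra_simps)
lemma det_rot2: "det2 (a - c) (b - c) = det2 (b - a) (c - a)" by (simp add: det2_def algebra_simps)

lemma bary_swap: "bary a b c = bary a c b"
proof (rule ext)
  fix x
  have 1: "det2 (c - x) (b - x) = - det2 (b - x) (c - x)" by (simp add: det2_def algebra_simps)
  have 2: "det2 (c - a) (b - a) = - det2 (b - a) (c - a)" by (simp add: det2_def algebra_simps)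
  show "bary a b c x = bary a c b x" unfolding bary_def 1 2 by simp
qed

lemma bary_self: "det2 (b - a) (c - a) \<noteq> 0 \<Longrightarrow> bary a b c a = 1" by (simp add: bary_def)
lemma bary_b: "bary a b c b = 0" by (simp add: bary_def det2_def)
lemma bary_c: "bary a b c c = 0" by (simp add: bary_def det2_def)

lemma bary_sum: "det2 (b - a) (c - a) \<noteq> 0 \<Longrightarrow> bary a b c x + bary b c a x + bary c a b x = 1"
proof -
  assume D: "det2 (b - a) (c - a) \<noteq> 0"
  have "det2 (b - x) (c - x) + det2 (c - x) (a - x) + det2 (a - x) (b - x) = det2 (b - a) (c - a)"
    by (simp add: det2_def algebra_simps)
  then show ?thesis using D unfolding bary_def det_rot1 det_rot2
    by (simp add: add_divide_distrib[symmetric])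
qed

lemma r1: fixes a1 a2 b1 b2 c1 c2 x1 x2 :: real shows
 "((b1-a1)*(c2-a2) - (b2-a2)*(c1-a1)) * x1 = ((b1-x1)*(c2-x2) - (b2-x2)*(c1-x1))*a1 + ((c1-x1)*(a2-x2) - (c2-x2)*(a1-x1))*b1 + ((a1-x1)*(b2-x2)-(a2-x2)*(b1-x1))*c1"
  by (simp add: algebra_simps)
lemma r2: fixes a1 a2 b1 b2 c1 c2 x1 x2 :: real shows
 "((b1-a1)*(c2-a2) - (b2-a2)*(c1-a1)) * x2 = ((b1-x1)*(c2-x2) - (b2-x2)*(c1-x1))*a2 + ((c1-x1)*(a2-x2) - (c2-x2)*(a1-x1))*b2 + ((a1-x1)*(b2-x2)-(a2-x2)*(b1-x1))*c2"
  by (simp add: algebra_simps)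

lemma bary_recon: "det2 (b - a) (c - a) \<noteq> 0 \<Longrightarrow>
   x = bary a b c x *\<^sub>R a + bary b c a x *\<^sub>R b + bary c a b x *\<^sub>R c"
proof -
  assume D: "det2 (b - a) (c - a) \<noteq> 0"
  have eq: "det2 (b - a) (c - a) *\<^sub>R x = det2 (b - x) (c - x) *\<^sub>R a + det2 (c - x) (a - x) *\<^sub>R b + det2 (a - x) (b - x) *\<^sub>R c"
    unfolding vec_eq_iff forall_2
    apply (simp only: vector_scaleR_component vector_add_component vector_minus_component det2_def real_scaleR_def)
    apply (rule conjI)
     apply (rule r1)
    apply (rule r2)
    done
  have "x = (1/det2 (b - a) (c - a)) *\<^sub>R (det2 (b - a) (c - a) *\<^sub>R x)"
    using D by simp
  also have "\<dots> = bary a b c x *\<^sub>R a + bary b c a x *\<^sub>R b + bary c a b x *\<^sub>R c"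
    unfolding eq bary_def det_rot1[where a=a and b=b and c=c] det_rot2[where a=a and b=b and c=c] scaleR_add_right scaleR_scaleR by (simp only: times_divide_eq_left mult_1_left det_rot1[where a=a and b=b and c=c] det_rot2[where a=a and b=b and c=c])
  finally show ?thesis .
qed


definition lamK :: "pt set \<Rightarrow> pt \<Rightarrow> pt \<Rightarrow> real" where
  "lamK K p = (if p \<in> K then (SOME f. \<exists>q r. K = {p,q,r} \<and> p\<noteq>q \<and> p\<noteq>r \<and> q\<noteq>r \<and> f = bary p q r) else (\<lambda>_. 0))"

lemma det_uv:
  assumes "det2 u v = 0"
  shows "u = 0 \<or> v = 0 \<or> (\<exists>k. v = k *\<^sub>R u)"
proof (cases "u = 0")
  case False
  have d: "u$1 * v$2 = u$2 * v$1" using assms by (simp add: det2_def)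
  show ?thesis
  proof (cases "u$1 = 0")
    case True
    then have u2: "u$2 \<noteq> 0" using False by (simp add: vec_eq_iff forall_2)
    then have "v$1 = 0" using d True by simp
    then have "v = (v$2 / u$2) *\<^sub>R u" using True u2 by (simp add: vec_eq_iff forall_2)
    then show ?thesis by blast
  next
    case f: False
    have "v$2 = v$1 / u$1 * u$2" using d f by (simp add: field_simps)
    then have "v = (v$1 / u$1) *\<^sub>R u" using f by (simp add: vec_eq_iff forall_2)
    then show ?thesis by blast
  qed
qed simp

lemma det_nz_collinear:
  assumes "det2 (b - a) (c - a) = 0"
  shows "collinear {a, b, c}"
proof -
  have "collinear {0, b - a, c - a}"
    unfolding collinear_lemma using det_uv[OF assms] .
  then have "collinear {b, a, c}" using collinear_3[of b a c] by simp
  then show ?thesis by (simp add: insert_commute)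
qed

lemma tri_abc:
  assumes "is_triangle K"
  obtains a b c where "K = {a,b,c}" "a\<noteq>b" "a\<noteq>c" "b\<noteq>c" "det2 (b - a) (c - a) \<noteq> 0"
proof -
  from assms obtain a b c where K: "K = {a,b,c}" "a\<noteq>b" "b\<noteq>c" "a\<noteq>c"
    unfolding is_triangle_def card_3_iff by blast
  have "\<not> affine_dependent K" using assms unfolding is_triangle_def by blast
  then have "det2 (b - a) (c - a) \<noteq> 0"
    using det_nz_collinear[of b a c] K collinear_3_eq_affine_dependent[of a b c] by blast
  then show ?thesis using that K by blast
qed

definition tri3 :: "pt \<Rightarrow> pt \<Rightarrow> pt \<Rightarrow> bool" where
  "tri3 a b c \<longleftrightarrow> a\<noteq>b \<and> a\<noteq>c \<and> b\<noteq>c \<and> det2 (b - a) (c - a) \<noteq> 0"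

lemma tri3_rot: "tri3 a b c \<Longrightarrow> tri3 b c a"
  unfolding tri3_def using det_rot1[where a=a and b=b and c=c] by auto
lemma tri3_swap: "tri3 a b c \<Longrightarrow> tri3 a c b"
proof -
  have "det2 (c - a) (b - a) = - det2 (b - a) (c - a)" by (simp add: det2_def algebra_simps)
  then show "tri3 a b c \<Longrightarrow> tri3 a c b" unfolding tri3_def by auto
qed

lemma lamK_eq:
  assumes "K = {p,q,r}" "p\<noteq>q" "p\<noteq>r" "q\<noteq>r"
  shows "lamK K p = bary p q r"
proof -
  have ex: "\<exists>f. \<exists>q r. K = {p,q,r} \<and> p\<noteq>q \<and> p\<noteq>r \<and> q\<noteq>r \<and> f = bary p q r" using assms by blast
  from someI_ex[OF ex] obtain q' r' where
    "K = {p,q',r'}" "p\<noteq>q'" "p\<noteq>r'" "q'\<noteq>r'"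
    "(SOME f. \<exists>q r. K = {p,q,r} \<and> p\<noteq>q \<and> p\<noteq>r \<and> q\<noteq>r \<and> f = bary p q r) = bary p q' r'" by blast
  moreover have "(q' = q \<and> r' = r) \<or> (q' = r \<and> r' = q)"
    using assms calculation(1-4) by (auto simp: insert_commute insert_eq_iff doubleton_eq_iff)
  ultimately show ?thesis using assms by (auto simp: lamK_def bary_swap)
qed

lemma lamK_abc:
  assumes "tri3 a b c"
  shows "lamK {a,b,c} a = bary a b c" "lamK {a,b,c} b = bary b c a" "lamK {a,b,c} c = bary c a b"
  using assms unfolding tri3_def
  by (auto intro!: lamK_eq simp: insert_commute)

lemma lamK_out: "p \<notin> K \<Longrightarrow> lamK K p x = 0" by (simp add: lamK_def)

lemma tri_tri3:
  assumes "is_triangle K"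
  obtains a b c where "K = {a,b,c}" "tri3 a b c"
  using tri_abc[OF assms] unfolding tri3_def by metis

lemma tri_affine: "is_triangle K \<Longrightarrow> affine_fun (lamK K p)"
proof -
  assume "is_triangle K"
  then obtain a b c where K: "K = {a,b,c}" "tri3 a b c" by (rule tri_tri3)
  show ?thesis
  proof (cases "p \<in> K")
    case True
    then show ?thesis using K lamK_abc[OF K(2)] by (auto intro: bary_affine)
  next
    case False
    then show ?thesis by (simp add: lamK_def affine_fun_const)
  qed
qed

lemma tri_vert:
  assumes "is_triangle K" "q \<in> K"
  shows "lamK K p q = (if p = q then 1 else 0)"
proof -
  obtain a b c where K: "K = {a,b,c}" "tri3 a b c" using assms(1) by (rule tri_tri3)
  have t: "tri3 b c a" "tri3 c a b" using K(2) tri3_rot by blast+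
  show ?thesis
  proof (cases "p \<in> K")
    case False then show ?thesis using assms by (auto simp: lamK_out)
  next
    case True
    then show ?thesis using assms(2) K lamK_abc[OF K(2)] t
      by (auto simp: bary_b bary_c bary_self tri3_def)
  qed
qed

lemma tri_sum:
  assumes "is_triangle K"
  shows "(\<Sum>p\<in>K. lamK K p x) = 1" "x = (\<Sum>p\<in>K. lamK K p x *\<^sub>R p)"
proof -
  obtain a b c where K: "K = {a,b,c}" "tri3 a b c" using assms(1) by (rule tri_tri3)
  show "(\<Sum>p\<in>K. lamK K p x) = 1"
    using K lamK_abc[OF K(2)] bary_sum[where a=a and b=b and c=c and x=x] unfolding tri3_def by (simp add: algebra_simps)
  show "x = (\<Sum>p\<in>K. lamK K p x *\<^sub>R p)"
    using K lamK_abc[OF K(2)] bary_recon[where a=a and b=b and c=c and x=x] unfolding tri3_def by (simp add: algebra_simps)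
qed

lemma tri_hull_combo:
  assumes "is_triangle K" "S \<subseteq> K" "x \<in> convex hull S"
  obtains \<nu> where "\<forall>s\<in>S. 0 \<le> \<nu> s" "sum \<nu> S = 1" "x = (\<Sum>s\<in>S. \<nu> s *\<^sub>R s)"
     "\<And>p. lamK K p x = (if p \<in> S then \<nu> p else 0)"
proof -
  have fK: "finite K" using assms(1) unfolding is_triangle_def by (metis card.infinite zero_neq_numeral)
  then have fS: "finite S" using assms(2) finite_subset by blast
  obtain \<nu> where \<nu>: "\<forall>s\<in>S. 0 \<le> \<nu> s" "sum \<nu> S = 1" "(\<Sum>s\<in>S. \<nu> s *\<^sub>R s) = x"
    using assms(3) unfolding convex_hull_finite[OF fS] by blast
  have "lamK K p x = (if p \<in> S then \<nu> p else 0)" for p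
  proof -
    have "lamK K p x = (\<Sum>s\<in>S. \<nu> s * lamK K p s)"
      using affine_fun_combo[OF tri_affine[OF assms(1)] fS \<nu>(2)] \<nu>(3) by simp
    also have "\<dots> = (\<Sum>s\<in>S. \<nu> s * (if p = s then 1 else 0))"
      using assms(2) tri_vert[OF assms(1)] by (intro sum.cong) auto
    also have "\<dots> = (if p \<in> S then \<nu> p else 0)"
      using fS by (simp add: if_distrib sum.delta cong: if_cong)
    finally show ?thesis .
  qed
  then show ?thesis using that \<nu> by metis
qed

lemma tri_hull_iff:
  assumes "is_triangle K"
  shows "x \<in> convex hull K \<longleftrightarrow> (\<forall>p\<in>K. lamK K p x \<ge> 0)"
proof
  assume "x \<in> convex hull K"
  then show "\<forall>p\<in>K. lamK K p x \<ge> 0"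
    using tri_hull_combo[OF assms order_refl] by metis
next
  assume h: "\<forall>p\<in>K. lamK K p x \<ge> 0"
  have fK: "finite K" using assms(1) unfolding is_triangle_def by (metis card.infinite zero_neq_numeral)
  show "x \<in> convex hull K"
    unfolding convex_hull_finite[OF fK] using h tri_sum[OF assms, of x] by force
qed

lemma tri_finite: "is_triangle K \<Longrightarrow> finite K"
  unfolding is_triangle_def by (metis card.infinite zero_neq_numeral)

lemma tri_mid:
  assumes "is_triangle K" "p \<in> K" "q \<in> K"
  shows "lamK K r (midpoint p q) = ((if r = p then 1 else 0) + (if r = q then 1 else 0)) / 2"
  using affine_fun_midpoint[OF tri_affine[OF assms(1)], of r p q] tri_vert[OF assms(1)] assms(2,3)
  by (auto simp: eq_commute[of r])


lemma tri_combo_val: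
  assumes "is_triangle K" "S \<subseteq> K" "sum \<nu> S = 1" "x = (\<Sum>s\<in>S. \<nu> s *\<^sub>R s)"
  shows "lamK K p x = (if p \<in> S then \<nu> p else 0)"
proof -
  have fS: "finite S" using assms(2) tri_finite[OF assms(1)] finite_subset by blast
  have "lamK K p x = (\<Sum>s\<in>S. \<nu> s * lamK K p s)"
    using affine_fun_combo[OF tri_affine[OF assms(1)] fS assms(3)] assms(4) by simp
  also have "\<dots> = (\<Sum>s\<in>S. \<nu> s * (if p = s then 1 else 0))"
    using assms(2) tri_vert[OF assms(1)] by (intro sum.cong) auto
  also have "\<dots> = (if p \<in> S then \<nu> p else 0)"
    using fS by (simp add: if_distrib cong: if_cong)
  finally show ?thesis .
qed

locale ctri =
  fixes Th :: "pt set set" and Om :: "pt set"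
  assumes ct: "conforming_triangulation Th Om"
begin

lemma finTh: "finite Th" using ct unfolding conforming_triangulation_def by blast
lemma triK: assumes "K \<in> Th" shows "is_triangle K" using ct assms unfolding conforming_triangulation_def by auto
lemma interK: "K1 \<in> Th \<Longrightarrow> K2 \<in> Th \<Longrightarrow> K1 \<noteq> K2 \<Longrightarrow>
   convex hull K1 \<inter> convex hull K2 = convex hull (K1 \<inter> K2)"
  using ct unfolding conforming_triangulation_def by blast
definition "U = (\<Union>K\<in>Th. convex hull K)"
lemma Om_def: "Om = interior U" using ct unfolding conforming_triangulation_def U_def by blast
lemma Om_sub: "Om \<subseteq> U" using Om_def interior_subset by blast
lemma open_Om: "open Om" using Om_def by simp
lemma closed_hull: "K \<in> Th \<Longrightarrow> closed (convex hull K)"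
  using triK tri_finite by (simp add: compact_imp_closed finite_imp_compact_convex_hull)
lemma closed_U: "closed U"
  unfolding U_def using finTh closed_hull by (intro closed_UN) auto

lemma lam_consistent:
  assumes "K1 \<in> Th" "K2 \<in> Th" "x \<in> convex hull K1" "x \<in> convex hull K2"
  shows "lamK K1 p x = lamK K2 p x"
proof (cases "K1 = K2")
  case False
  define S where "S = K1 \<inter> K2"
  have x: "x \<in> convex hull S" using interK[OF assms(1,2) False] assms(3,4) S_def by blast
  have fS: "finite S" using S_def tri_finite[OF triK[OF assms(1)]] by blast
  obtain \<nu> where "sum \<nu> S = 1" "(\<Sum>s\<in>S. \<nu> s *\<^sub>R s) = x"
    using x unfolding convex_hull_finite[OF fS] by blast
  then show ?thesis
    using tri_combo_val[OF triK[OF assms(1)], of S \<nu> x p] tri_combo_val[OF triK[OF assms(2)], of S \<nu> x p]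
    unfolding S_def by auto
qed simp

definition Phi :: "pt \<Rightarrow> pt \<Rightarrow> real" where
  "Phi p x = (if \<exists>K\<in>Th. x \<in> convex hull K then lamK (SOME K. K\<in>Th \<and> x \<in> convex hull K) p x else 0)"

lemma Phi_on: "K \<in> Th \<Longrightarrow> x \<in> convex hull K \<Longrightarrow> Phi p x = lamK K p x"
  unfolding Phi_def
  by (metis (mono_tags, lifting) lam_consistent someI_ex)

lemma Phi_out: "x \<notin> U \<Longrightarrow> Phi p x = 0"
  unfolding Phi_def U_def by auto

end


lemma affine_line: "affine_fun f \<Longrightarrow> f (x + t *\<^sub>R (y - x)) = f x + t * (f y - f x)"
  unfolding affine_fun_def by (auto simp: inner_add_right inner_diff_right algebra_simps)

lemma affine_open_pos: "affine_fun f \<Longrightarrow> affine_fun g \<Longrightarrow> open {y. f y > 0 \<and> g y > 0}"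
proof -
  assume "affine_fun f" "affine_fun g"
  then have "continuous_on UNIV f" "continuous_on UNIV g" by (auto intro: affine_fun_cont)
  then have "open {y. 0 < f y}" "open {y. 0 < g y}" by (auto intro!: open_Collect_less continuous_on_const)
  then have "open ({y. 0 < f y} \<inter> {y. 0 < g y})" by blast
  then show ?thesis by (simp add: Collect_conj_eq)
qed

lemma tri_third:
  assumes "is_triangle K" "a \<in> K" "b \<in> K" "a \<noteq> b"
  obtains c where "K = {a,b,c}" "c \<noteq> a" "c \<noteq> b"
proof -
  obtain x y w where K: "K = {x,y,w}" "tri3 x y w" using tri_tri3[OF assms(1)] .
  then have "x\<noteq>y" "x\<noteq>w" "y\<noteq>w" unfolding tri3_def by auto
  then show ?thesis using that assms(2-4) K(1) by (auto simp: insert_commute)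
qed

lemma combo3:
  assumes "is_triangle K" "K = {a,b,c}" "c \<noteq> a" "c \<noteq> b" "a \<noteq> b" "affine_fun f" "f a = 0" "f b = 0"
  shows "f y = lamK K c y * f c"
proof -
  have fK: "finite K" using tri_finite[OF assms(1)] .
  have "f y = f (\<Sum>p\<in>K. lamK K p y *\<^sub>R p)" using tri_sum(2)[OF assms(1), of y] by simp
  also have "\<dots> = (\<Sum>p\<in>K. lamK K p y * f p)"
    by (rule affine_fun_combo[OF assms(6) fK tri_sum(1)[OF assms(1)]])
  also have "\<dots> = lamK K c y * f c" using assms(2-5,7,8) by simp
  finally show ?thesis .
qed

locale zsetup = ctri +
  fixes z a b K0
  assumes K0: "K0 \<in> Th" and aK0: "a \<in> K0" and bK0: "b \<in> K0" and ab: "a \<noteq> b"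
    and zab: "z = midpoint a b" and zOm: "z \<in> Om"
begin

definition psi0 :: "pt \<Rightarrow> real" where "psi0 x = 4 * Phi a x * Phi b x"

lemma mid_in_hull:
  assumes "K \<in> Th" "p \<in> K" "q \<in> K"
  shows "midpoint p q \<in> convex hull K"
  unfolding tri_hull_iff[OF triK[OF assms(1)]]
  by (subst tri_mid[OF triK[OF assms(1)] assms(2,3)]) simp

lemma psi0_out: "x \<notin> Om \<Longrightarrow> psi0 x = 0"
proof (rule ccontr)
  assume xO: "x \<notin> Om" and nz: "psi0 x \<noteq> 0"
  then have "x \<in> U" using Phi_out unfolding psi0_def by auto
  then obtain K where K: "K \<in> Th" "x \<in> convex hull K" unfolding U_def by blast
  note tK = triK[OF K(1)]
  have nz': "lamK K a x \<noteq> 0" "lamK K b x \<noteq> 0" using nz Phi_on[OF K] unfolding psi0_def by auto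
  then have aK: "a \<in> K" and bK: "b \<in> K" using lamK_out by blast+
  have la: "lamK K a x > 0" "lamK K b x > 0"
    using nz' tri_hull_iff[OF tK] K(2) aK bK by (auto simp: order_le_less)
  obtain c where Kc: "K = {a,b,c}" "c \<noteq> a" "c \<noteq> b" using tri_third[OF tK aK bK ab] .
  have cK: "c \<in> K" using Kc by auto
  have lc0: "lamK K c x \<ge> 0" using tri_hull_iff[OF tK] K(2) cK by auto
  have affK: "\<And>p. affine_fun (lamK K p)" using tri_affine[OF tK] .
  have intO: "x \<in> Om" if "open W" "x \<in> W" "W \<subseteq> U" for W
    using that unfolding Om_def by (meson interior_maximal subsetD)
  show False
  proof (cases "lamK K c x > 0")
    case True
    let ?O = "{y. lamK K a y > 0 \<and> lamK K b y > 0} \<inter> {y. lamK K c y > 0 \<and> lamK K c y > 0}"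
    have "open ?O" using affine_open_pos affK by blast
    moreover have "x \<in> ?O" using la True by auto
    moreover have "?O \<subseteq> U"
    proof
      fix y assume "y \<in> ?O"
      then have "\<forall>q\<in>K. lamK K q y \<ge> 0" using Kc by auto
      then have "y \<in> convex hull K" using tri_hull_iff[OF tK] by blast
      then show "y \<in> U" unfolding U_def using K(1) by blast
    qed
    ultimately show False using intO xO by blast
  next
    case False
    then have lcx: "lamK K c x = 0" using lc0 by auto
    define F where "F = (\<Union>K'\<in>{K'\<in>Th. z \<notin> convex hull K'}. convex hull K')"
    have "closed F" unfolding F_def using finTh closed_hull by (intro closed_UN) auto
    have zF: "z \<notin> F" unfolding F_def by blast
    have "open (Om - F)" using open_Om \<open>closed F\<close> by (simp add: open_Diff)
    then obtain r where r: "r > 0" "ball z r \<subseteq> Om - F" using zOm zF open_contains_ball by blast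
    define t where "t = r / (2 * (norm (c - z) + 1))"
    have n1: "norm (c - z) + 1 > 0" by (metis norm_ge_zero add_nonneg_pos zero_less_one)
    have t: "t > 0" unfolding t_def using r(1) n1 by simp
    define p where "p = z + (-t) *\<^sub>R (c - z)"
    have "dist z p = t * norm (c - z)" unfolding p_def dist_norm using t by simp
    also have "\<dots> = r * (norm (c - z) / (2 * (norm (c - z) + 1)))" unfolding t_def by simp
    also have "\<dots> < r"
    proof -
      have "norm (c - z) / (2 * (norm (c - z) + 1)) < 1" using n1 by (simp add: divide_less_eq)
      from mult_strict_left_mono[OF this r(1)] show ?thesis by simp
    qed
    finally have "p \<in> ball z r" by simp
    then have pO: "p \<in> Om" and pF: "p \<notin> F" using r by auto
    have zK: "z \<in> convex hull K" using mid_in_hull[OF K(1) aK bK] zab by simp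
    have lcz: "lamK K c z = 0" using tri_mid[OF tK aK bK, of c] Kc zab by simp
    have lcc: "lamK K c c = 1" using tri_vert[OF tK cK] by simp
    have lcp: "lamK K c p < 0"
      unfolding p_def using affine_line[OF affK[of c], of z "-t" c] lcz lcc t by simp
    obtain K' where K': "K' \<in> Th" "p \<in> convex hull K'" using pO Om_sub unfolding U_def by blast
    have zK': "z \<in> convex hull K'" using pF K' unfolding F_def by blast
    note tK' = triK[OF K'(1)]
    have "lamK K' a z = lamK K a z" "lamK K' b z = lamK K b z"
      using lam_consistent[OF K'(1) K(1) zK' zK] by auto
    moreover have "lamK K a z = 1/2" "lamK K b z = 1/2"
      using tri_mid[OF tK aK bK] zab ab by auto
    ultimately have "a \<in> K'" "b \<in> K'" using lamK_out by force+
    then obtain c' where Kc': "K' = {a,b,c'}" "c' \<noteq> a" "c' \<noteq> b" using tri_third[OF tK' _ _ ab] by blast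
    have c'K': "c' \<in> K'" using Kc' by auto
    have lca: "lamK K c a = 0" "lamK K c b = 0" using tri_vert[OF tK] aK bK Kc by auto
    have rel: "\<And>y. lamK K c y = lamK K' c' y * lamK K c c'"
      using combo3[OF tK' Kc'(1-3) ab affK[of c] lca] .
    have "lamK K' c' p \<ge> 0" using tri_hull_iff[OF tK'] K'(2) c'K' by auto
    then have neg: "lamK K c c' < 0" using rel[of p] lcp by (smt (verit) mult_nonneg_nonneg)
    have xK': "x \<in> convex hull K'"
    proof -
      have "x = (\<Sum>q\<in>K. lamK K q x *\<^sub>R q)" using tri_sum(2)[OF tK] .
      also have "\<dots> = lamK K a x *\<^sub>R a + lamK K b x *\<^sub>R b" using Kc lcx ab by simp
      finally have "x = lamK K a x *\<^sub>R a + lamK K b x *\<^sub>R b" .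
      moreover have "lamK K a x + lamK K b x = 1" using tri_sum(1)[OF tK, of x] Kc lcx ab by simp
      ultimately have "x \<in> convex hull {a,b}" unfolding convex_hull_2 using la by force
      moreover have "convex hull {a,b} \<subseteq> convex hull K'" using Kc' by (intro hull_mono) auto
      ultimately show ?thesis by blast
    qed
    have eqa: "lamK K' a x = lamK K a x" "lamK K' b x = lamK K b x"
      using lam_consistent[OF K'(1) K(1) xK' K(2)] by auto
    let ?O = "{y. lamK K a y > 0 \<and> lamK K b y > 0} \<inter> {y. lamK K' a y > 0 \<and> lamK K' b y > 0}"
    have "open ?O" using affine_open_pos affK tri_affine[OF tK'] by blast
    moreover have "x \<in> ?O" using la eqa by auto
    moreover have "?O \<subseteq> U"
    proof
      fix y assume y: "y \<in> ?O"
      show "y \<in> U"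
      proof (cases "lamK K c y \<ge> 0")
        case True
        then have "\<forall>q\<in>K. lamK K q y \<ge> 0" using y Kc by auto
        then have "y \<in> convex hull K" using tri_hull_iff[OF tK] by blast
        then show "y \<in> U" unfolding U_def using K(1) by blast
      next
        case False
        then have "lamK K' c' y > 0" using rel[of y] neg by (smt (verit) mult_nonpos_nonpos)
        then have "\<forall>q\<in>K'. lamK K' q y \<ge> 0" using y Kc' by auto
        then have "y \<in> convex hull K'" using tri_hull_iff[OF tK'] by blast
        then show "y \<in> U" unfolding U_def using K'(1) by blast
      qed
    qed
    ultimately show False using intO xO by blast
  qed
qed

end


lemma P2_affprod:
  assumes "affine_fun f" "affine_fun g"
  shows "is_P2_on S (\<lambda>x. k * f x * g x)"
proof -
  obtain w \<beta> where f: "\<And>x. f x = inner w x + \<beta>" using assms(1) unfolding affine_fun_def by blast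
  obtain v \<gamma> where g: "\<And>x. g x = inner v x + \<gamma>" using assms(2) unfolding affine_fun_def by blast
  show ?thesis unfolding is_P2_on_def f g inner2
    apply (rule exI[of _ "k * \<beta> * \<gamma>"])
    apply (rule exI[of _ "k * (w $ 1 * \<gamma> + v $ 1 * \<beta>)"])
    apply (rule exI[of _ "k * (w $ 2 * \<gamma> + v $ 2 * \<beta>)"])
    apply (rule exI[of _ "k * w $ 1 * v $ 1"])
    apply (rule exI[of _ "k * (w $ 1 * v $ 2 + w $ 2 * v $ 1)"])
    apply (rule exI[of _ "k * w $ 2 * v $ 2"])
    apply (simp add: algebra_simps power2_eq_square)
    done
qed

lemma P2_cong: "is_P2_on S f \<Longrightarrow> (\<And>x. x \<in> S \<Longrightarrow> g x = f x) \<Longrightarrow> is_P2_on S g"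
  unfolding is_P2_on_def by metis

lemma P2_lin: "is_P2_on S f \<Longrightarrow> is_P2_on S g \<Longrightarrow> is_P2_on S (\<lambda>x. f x + t * g x)"
proof -
  assume F: "is_P2_on S f" and G: "is_P2_on S g"
  obtain a0 a1 a2 a11 a12 a22 where
    f: "\<forall>x\<in>S. f x = a0 + a1 * x$1 + a2 * x$2 + a11 * (x$1)^2 + a12 * (x$1 * x$2) + a22 * (x$2)^2"
    using F unfolding is_P2_on_def by blast
  obtain b0 b1 b2 b11 b12 b22 where
    g: "\<forall>x\<in>S. g x = b0 + b1 * x$1 + b2 * x$2 + b11 * (x$1)^2 + b12 * (x$1 * x$2) + b22 * (x$2)^2"
    using G unfolding is_P2_on_def by blast
  show ?thesis unfolding is_P2_on_def
    apply (rule exI[of _ "a0 + t*b0"], rule exI[of _ "a1 + t*b1"], rule exI[of _ "a2 + t*b2"],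
           rule exI[of _ "a11 + t*b11"], rule exI[of _ "a12 + t*b12"], rule exI[of _ "a22 + t*b22"])
    using f g by (simp add: algebra_simps)
qed

lemma affine_diff: "affine_fun f \<Longrightarrow> f differentiable (at x)"
proof -
  assume "affine_fun f"
  then obtain w \<beta> where "\<And>x. f x = inner w x + \<beta>" unfolding affine_fun_def by blast
  then have "f = (\<lambda>x. inner w x + \<beta>)" by auto
  then show ?thesis by simp
qed

lemma frech_scale:
  fixes f :: "pt \<Rightarrow> real" and t :: real
  assumes "f differentiable (at x)"
  shows "frechet_derivative (\<lambda>y. t * f y) (at x) = (\<lambda>h. t * frechet_derivative f (at x) h)"
proof -
  have "(f has_derivative frechet_derivative f (at x)) (at x)" using assms frechet_derivative_works by blast
  from has_derivative_mult[OF has_derivative_const[of t] this]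
  have "((\<lambda>y. t * f y) has_derivative (\<lambda>h. t * frechet_derivative f (at x) h)) (at x)"
    by simp
  then show ?thesis using frechet_derivative_at by metis
qed

context zsetup begin

lemma psi0_on: "K \<in> Th \<Longrightarrow> x \<in> convex hull K \<Longrightarrow> psi0 x = 4 * lamK K a x * lamK K b x"
  unfolding psi0_def using Phi_on by simp

lemma psi0_P2: "K \<in> Th \<Longrightarrow> is_P2_on (convex hull K) psi0"
  using P2_cong[OF P2_affprod[OF tri_affine tri_affine]] triK psi0_on by metis

lemma psi0_cont: "continuous_on UNIV psi0"
proof -
  have U: "UNIV = (\<Union>K\<in>Th. convex hull K) \<union> (- Om)" using Om_sub unfolding U_def by blast
  have c1: "continuous_on (\<Union>K\<in>Th. convex hull K) psi0"
  proof (rule continuous_on_closed_Union[OF finTh closed_hull])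
    fix K assume K: "K \<in> Th"
    have "continuous_on (convex hull K) (\<lambda>x. 4 * lamK K a x * lamK K b x)"
      using tri_affine[OF triK[OF K]] affine_fun_cont by (intro continuous_intros) auto
    then show "continuous_on (convex hull K) psi0"
      by (rule continuous_on_eq) (simp add: psi0_on[OF K])
  qed
  have c2: "continuous_on (- Om) psi0"
    by (rule continuous_on_eq[OF continuous_on_const[of _ 0]]) (simp add: psi0_out)
  have "continuous_on ((\<Union>K\<in>Th. convex hull K) \<union> (- Om)) psi0"
    using c1 c2 finTh closed_hull open_Om by (intro continuous_on_closed_Un) (auto simp: closed_Compl)
  then show ?thesis using U by metis
qed

lemma z_hull: "z \<in> convex hull K0" using mid_in_hull[OF K0 aK0 bK0] zab by simp

lemma psi0_z: "psi0 z = 1"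
proof -
  have h: "lamK K0 a z = 1/2" "lamK K0 b z = 1/2" using tri_mid[OF triK[OF K0] aK0 bK0] zab ab by auto
  show ?thesis unfolding psi0_on[OF K0 z_hull] h by simp
qed

lemma psi0_vert: "y \<in> all_verts Th \<Longrightarrow> psi0 y = 0"
proof -
  assume "y \<in> all_verts Th"
  then obtain K where K: "K \<in> Th" "y \<in> K" unfolding all_verts_def by blast
  have "y \<in> convex hull K" using K(2) by (simp add: hull_inc)
  then have "psi0 y = 4 * lamK K a y * lamK K b y" using psi0_on[OF K(1)] by simp
  moreover have "lamK K a y = (if a = y then 1 else 0)" "lamK K b y = (if b = y then 1 else 0)"
    using tri_vert[OF triK[OF K(1)] K(2)] by auto
  ultimately show ?thesis using ab by auto
qed

lemma psi0_mid: "y \<in> all_mids Th \<Longrightarrow> y \<noteq> z \<Longrightarrow> psi0 y = 0"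
proof -
  assume y: "y \<in> all_mids Th" "y \<noteq> z"
  then obtain K p q where K: "K \<in> Th" "p \<in> K" "q \<in> K" "p \<noteq> q" "y = midpoint p q"
    unfolding all_mids_def mids_def by blast
  have "y \<in> convex hull K" using mid_in_hull K by simp
  then have "psi0 y = 4 * lamK K a y * lamK K b y" using psi0_on K(1) by blast
  also have "\<dots> = 4 * (((if a = p then 1 else 0) + (if a = q then 1 else 0)) / 2) * (((if b = p then 1 else 0) + (if b = q then 1 else 0)) / 2)"
    unfolding K(5) tri_mid[OF triK[OF K(1)] K(2,3)] by (rule refl)
  also have "\<dots> = 0" using y(2) K(4,5) zab ab by (auto simp: midpoint_sym)
  finally show ?thesis .
qed

lemma psi0_Vh: "psi0 \<in> Vh Th Om"
  unfolding Vh_def using psi0_cont psi0_out psi0_P2 by blast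

definition "Nf = (\<Union>K\<in>Th. frontier (convex hull K))"

lemma negl_N: "negligible Nf"
  unfolding Nf_def using finTh by (intro negligible_Union) (auto intro: negligible_convex_frontier)

lemma psi0_diff: "x \<in> Om \<Longrightarrow> x \<notin> Nf \<Longrightarrow> psi0 differentiable (at x)"
proof -
  assume x: "x \<in> Om" "x \<notin> Nf"
  then obtain K where K: "K \<in> Th" "x \<in> convex hull K" using Om_sub unfolding U_def by blast
  then have xi: "x \<in> interior (convex hull K)"
    using x(2) closed_hull[OF K(1)] unfolding Nf_def frontier_def by (auto simp: closure_closed)
  have "(\<lambda>y. 4 * lamK K a y * lamK K b y) differentiable (at x)"
    by (intro differentiable_mult differentiable_const affine_diff tri_affine triK K(1))
  then obtain D where D: "((\<lambda>y. 4 * lamK K a y * lamK K b y) has_derivative D) (at x)"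
    unfolding differentiable_def by blast
  have eq: "4 * lamK K a y * lamK K b y = psi0 y" if "y \<in> interior (convex hull K)" for y
  proof -
    have "y \<in> convex hull K" using that interior_subset by blast
    then show ?thesis by (simp add: psi0_on[OF K(1)])
  qed
  have "(psi0 has_derivative D) (at x)"
    by (rule has_derivative_transform_within_open[OF D open_interior xi eq])
  then show ?thesis unfolding differentiable_def by blast
qed

end


definition Qf :: "real\<Rightarrow>real\<Rightarrow>real\<Rightarrow>real\<Rightarrow>real\<Rightarrow>real\<Rightarrow>real\<Rightarrow>real\<Rightarrow>real\<Rightarrow>real\<Rightarrow>real\<Rightarrow>real\<Rightarrow>real\<Rightarrow>real\<Rightarrow>real\<Rightarrow>real" where
 "Qf k0 k1 k2 k11 k12 k22 a1 a2 b1 b2 c1 c2 m1 m2 m3 =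
   (let ss = m1+m2+m3; X1 = m1*a1+m2*b1+m3*c1; X2 = m1*a2+m2*b2+m3*c2 in
    k0 * ss^2 + (k1*X1 + k2*X2) * ss + k11*X1^2 + k12*(X1*X2) + k22*X2^2)"

lemma Q_expand: "Qf k0 k1 k2 k11 k12 k22 a1 a2 b1 b2 c1 c2 m1 m2 m3 =
  Qf k0 k1 k2 k11 k12 k22 a1 a2 b1 b2 c1 c2 1 0 0 * m1^2 +
  Qf k0 k1 k2 k11 k12 k22 a1 a2 b1 b2 c1 c2 0 1 0 * m2^2 +
  Qf k0 k1 k2 k11 k12 k22 a1 a2 b1 b2 c1 c2 0 0 1 * m3^2 +
  (4*Qf k0 k1 k2 k11 k12 k22 a1 a2 b1 b2 c1 c2 (1/2) (1/2) 0 - Qf k0 k1 k2 k11 k12 k22 a1 a2 b1 b2 c1 c2 1 0 0 - Qf k0 k1 k2 k11 k12 k22 a1 a2 b1 b2 c1 c2 0 1 0) * (m1*m2) +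
  (4*Qf k0 k1 k2 k11 k12 k22 a1 a2 b1 b2 c1 c2 (1/2) 0 (1/2) - Qf k0 k1 k2 k11 k12 k22 a1 a2 b1 b2 c1 c2 1 0 0 - Qf k0 k1 k2 k11 k12 k22 a1 a2 b1 b2 c1 c2 0 0 1) * (m1*m3) +
  (4*Qf k0 k1 k2 k11 k12 k22 a1 a2 b1 b2 c1 c2 0 (1/2) (1/2) - Qf k0 k1 k2 k11 k12 k22 a1 a2 b1 b2 c1 c2 0 1 0 - Qf k0 k1 k2 k11 k12 k22 a1 a2 b1 b2 c1 c2 0 0 1) * (m2*m3)"
  unfolding Qf_def Let_def by (simp add: algebra_simps power2_eq_square)

lemma QPt:
  fixes a b c :: pt
  assumes "m1 + m2 + m3 = 1"
  shows "Qf k0 k1 k2 k11 k12 k22 (a$1) (a$2) (b$1) (b$2) (c$1) (c$2) m1 m2 m3 =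
     (let y = m1 *\<^sub>R a + m2 *\<^sub>R b + m3 *\<^sub>R c in k0 + k1 * y$1 + k2 * y$2 + k11 * (y$1)^2 + k12 * (y$1 * y$2) + k22 * (y$2)^2)"
  unfolding Qf_def Let_def assms
  by (simp only: vector_add_component vector_scaleR_component real_scaleR_def power_one mult_1_right)

lemma unisolve:
  assumes t: "tri3 a b c"
    and q: "\<forall>x\<in>convex hull {a,b,c}. q x = k0 + k1 * x$1 + k2 * x$2 + k11 * (x$1)^2 + k12 * (x$1 * x$2) + k22 * (x$2)^2"
    and z: "q a = 0" "q b = 0" "q c = 0" "q (midpoint a b) = 0" "q (midpoint a c) = 0" "q (midpoint b c) = 0"
    and x: "x \<in> convex hull {a,b,c}"
  shows "q x = 0"
proof -
  define P where "P y = k0 + k1 * y$1 + k2 * y$2 + k11 * (y$1)^2 + k12 * (y$1 * y$2) + k22 * (y$2)^2" for y :: pt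
  define Q where "Q m1 m2 m3 = Qf k0 k1 k2 k11 k12 k22 (a$1) (a$2) (b$1) (b$2) (c$1) (c$2) m1 m2 m3" for m1 m2 m3
  have QP: "Q m1 m2 m3 = P (m1 *\<^sub>R a + m2 *\<^sub>R b + m3 *\<^sub>R c)" if "m1 + m2 + m3 = 1" for m1 m2 m3
    unfolding Q_def QPt[OF that] Let_def P_def by (rule refl)
  have inh: "y \<in> convex hull {a,b,c}" if "y \<in> {a,b,c}" for y using that by (simp add: hull_inc)
  have mh: "midpoint p r \<in> convex hull {a,b,c}" if "p \<in> {a,b,c}" "r \<in> {a,b,c}" for p r
    using midpoints_in_convex_hull[OF inh[OF that(1)] inh[OF that(2)]] .
  have q0: "P y = 0" if "y \<in> {a,b,c,midpoint a b, midpoint a c, midpoint b c}" for y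
    using that q z inh mh unfolding P_def by auto
  have Q100: "Q 1 0 0 = 0" using QP[of 1 0 0] q0 by simp
  have Q010: "Q 0 1 0 = 0" using QP[of 0 1 0] q0 by simp
  have Q001: "Q 0 0 1 = 0" using QP[of 0 0 1] q0 by simp
  have Q1: "Q (1/2) (1/2) 0 = 0" using QP[of "1/2" "1/2" 0] q0[of "midpoint a b"] by (simp add: midpoint_def scaleR_add_right)
  have Q2: "Q (1/2) 0 (1/2) = 0" using QP[of "1/2" 0 "1/2"] q0[of "midpoint a c"] by (simp add: midpoint_def scaleR_add_right)
  have Q3: "Q 0 (1/2) (1/2) = 0" using QP[of 0 "1/2" "1/2"] q0[of "midpoint b c"] by (simp add: midpoint_def scaleR_add_right)
  have D: "det2 (b - a) (c - a) \<noteq> 0" using t unfolding tri3_def by simp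
  have "x = bary a b c x *\<^sub>R a + bary b c a x *\<^sub>R b + bary c a b x *\<^sub>R c" using bary_recon[OF D] .
  then have "P x = Q (bary a b c x) (bary b c a x) (bary c a b x)"
    using QP bary_sum[OF D, of x] by simp
  also have "\<dots> = 0" unfolding Q_def
    apply (subst Q_expand)
    using Q100 Q010 Q001 Q1 Q2 Q3 unfolding Q_def by simp
  finally show ?thesis using q x unfolding P_def by simp
qed


lemma P2_diff: "is_P2_on S f \<Longrightarrow> is_P2_on S g \<Longrightarrow> is_P2_on S (\<lambda>x. f x - g x)"
  using P2_lin[of S f g "-1"] by simp

lemma tri_measure_pos:
  assumes "is_triangle K"
  shows "measure lebesgue (convex hull K) > 0"
proof -
  obtain a b c where K: "K = {a,b,c}" "tri3 a b c" using tri_tri3[OF assms] .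
  have d: "a \<noteq> b" "a \<noteq> c" "b \<noteq> c" using K(2) unfolding tri3_def by auto
  define g where "g = (1/3) *\<^sub>R a + (1/3) *\<^sub>R b + (1/3) *\<^sub>R c"
  have gs: "g = (\<Sum>s\<in>K. (\<lambda>_. 1/3::real) s *\<^sub>R s)" unfolding g_def K(1) using d by (simp add: algebra_simps)
  have s1: "sum (\<lambda>_. 1/3::real) K = 1" unfolding K(1) using d by simp
  have lg: "lamK K p g = 1/3" if "p \<in> K" for p
    using tri_combo_val[OF assms order_refl s1 gs, of p] that by simp
  have aff: "\<And>p. affine_fun (lamK K p)" using tri_affine[OF assms] .
  let ?O = "{y. lamK K a y > 0 \<and> lamK K b y > 0} \<inter> {y. lamK K c y > 0 \<and> lamK K c y > 0}"
  have l3: "lamK K a g = 1/3" "lamK K b g = 1/3" "lamK K c g = 1/3" using lg K(1) by auto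
  have "open ?O" using affine_open_pos aff by blast
  moreover have "g \<in> ?O" unfolding mem_Collect_eq Int_iff l3 by simp
  ultimately obtain r where r: "r > 0" "ball g r \<subseteq> ?O" using open_contains_ball by blast
  have sub: "ball g r \<subseteq> convex hull K"
  proof
    fix y assume "y \<in> ball g r"
    then have "\<forall>q\<in>K. lamK K q y \<ge> 0" using r(2) K(1) by auto
    then show "y \<in> convex hull K" using tri_hull_iff[OF assms] by blast
  qed
  have "convex hull K \<in> lmeasurable"
    using tri_finite[OF assms] by (intro lmeasurable_compact finite_imp_compact_convex_hull)
  then have "measure lebesgue (ball g r) \<le> measure lebesgue (convex hull K)"
    using sub by (intro measure_mono_fmeasurable) auto
  moreover have "measure lebesgue (ball g r) > 0" using content_ball_pos[OF r(1), of g] by simp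
  ultimately show ?thesis by linarith
qed

lemma L2_scale: "L2ip Om f (\<lambda>x. t * g x) = t * L2ip Om f g"
proof -
  have "(\<lambda>x. f x * (t * g x)) = (\<lambda>x. t * (f x * g x))" by (simp add: algebra_simps)
  then show ?thesis unfolding L2ip_def by simp
qed

lemma finite_mids: "finite K \<Longrightarrow> finite (mids K)"
proof -
  assume "finite K"
  moreover have "mids K \<subseteq> (\<lambda>(p,q). midpoint p q) ` (K \<times> K)" unfolding mids_def by auto
  ultimately show ?thesis by (meson finite_SigmaI finite_imageI finite_subset)
qed

context ctri begin

lemma finite_all_mids: "finite (all_mids Th)"
  unfolding all_mids_def using finTh finite_mids tri_finite triK by blast

lemma Vh_unique:
  assumes p1: "p1 \<in> Vh Th Om" and p2: "p2 \<in> Vh Th Om"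
    and eq: "\<forall>y\<in>all_verts Th \<union> all_mids Th. p1 y = p2 y"
  shows "p1 = p2"
proof
  fix x
  show "p1 x = p2 x"
  proof (cases "x \<in> Om")
    case False then show ?thesis using p1 p2 unfolding Vh_def by auto
  next
    case True
    then obtain K where K: "K \<in> Th" "x \<in> convex hull K" using Om_sub unfolding U_def by blast
    obtain a b c where Kc: "K = {a,b,c}" "tri3 a b c" using tri_tri3[OF triK[OF K(1)]] .
    have d: "a \<noteq> b" "a \<noteq> c" "b \<noteq> c" using Kc(2) unfolding tri3_def by auto
    have P2: "is_P2_on (convex hull K) (\<lambda>x. p1 x - p2 x)"
      using p1 p2 K(1) unfolding Vh_def by (auto intro: P2_diff)
    then obtain k0 k1 k2 k11 k12 k22 where
      q: "\<forall>x\<in>convex hull {a,b,c}. p1 x - p2 x = k0 + k1 * x$1 + k2 * x$2 + k11 * (x$1)^2 + k12 * (x$1 * x$2) + k22 * (x$2)^2"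
      unfolding is_P2_on_def Kc(1) by blast
    have vK: "y \<in> all_verts Th" if "y \<in> K" for y using that K(1) unfolding all_verts_def by blast
    have mK: "midpoint p r \<in> all_mids Th" if "p \<in> K" "r \<in> K" "p \<noteq> r" for p r
      using that K(1) unfolding all_mids_def mids_def by blast
    have z0: "(\<lambda>x. p1 x - p2 x) y = 0" if "y \<in> all_verts Th \<union> all_mids Th" for y
      using eq that by simp
    have "(\<lambda>x. p1 x - p2 x) x = 0"
      apply (rule unisolve[OF Kc(2) q])
      using z0 vK mK Kc(1) d K(2) by auto
    then show ?thesis by simp
  qed
qed

end

context zsetup begin

lemma z_mids: "z \<in> mids K0" unfolding mids_def using aK0 bK0 ab zab by blast
lemma z_all_mids: "z \<in> all_mids Th" unfolding all_mids_def using z_mids K0 by blast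
lemma z_int: "z \<in> int_mids Th Om" unfolding int_mids_def using z_all_mids zOm by blast

lemma psi_eq: "psi Th Om z = psi0"
  unfolding psi_def
proof (rule the_equality)
  show "psi0 \<in> Vh Th Om \<and> psi0 z = 1 \<and> (\<forall>y\<in>all_verts Th \<union> all_mids Th. y \<noteq> z \<longrightarrow> psi0 y = 0)"
    using psi0_Vh psi0_z psi0_vert psi0_mid by blast
next
  fix p assume p: "p \<in> Vh Th Om \<and> p z = 1 \<and> (\<forall>y\<in>all_verts Th \<union> all_mids Th. y \<noteq> z \<longrightarrow> p y = 0)"
  show "p = psi0"
  proof (rule Vh_unique)
    show "p \<in> Vh Th Om" "psi0 \<in> Vh Th Om" using p psi0_Vh by auto
    show "\<forall>y\<in>all_verts Th \<union> all_mids Th. p y = psi0 y"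
    proof
      fix y assume y: "y \<in> all_verts Th \<union> all_mids Th"
      show "p y = psi0 y"
      proof (cases "y = z")
        case True then show ?thesis using p psi0_z by simp
      next
        case False then show ?thesis using p y psi0_vert psi0_mid by auto
      qed
    qed
  qed
qed

definition phi :: "pt set \<Rightarrow> pt \<Rightarrow> real" where
  "phi K x = (if z \<in> mids K then (\<Sum>p\<in>K. (4 * lamK K p z - 1) * lamK K p x) else 0)"

lemma phi_aff: "K \<in> Th \<Longrightarrow> affine_fun (phi K)"
proof (cases "z \<in> mids K")
  case True
  assume K: "K \<in> Th"
  have "affine_fun (\<lambda>x. \<Sum>p\<in>K. (4 * lamK K p z - 1) * lamK K p x)"
    using tri_finite[OF triK[OF K]] tri_affine[OF triK[OF K]] by (intro affine_fun_sum affine_fun_cmul) auto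
  then show ?thesis using True unfolding phi_def by simp
qed (unfold phi_def, simp add: affine_fun_const)

lemma phi_mid:
  assumes K: "K \<in> Th" and w: "w \<in> mids K"
  shows "phi K w = (if w = z then 1 else 0)"
proof (cases "z \<in> mids K")
  case False
  then show ?thesis using w unfolding phi_def by auto
next
  case True
  note tK = triK[OF K]
  obtain p' q' where pq': "p' \<in> K" "q' \<in> K" "p' \<noteq> q'" "z = midpoint p' q'" using True unfolding mids_def by blast
  obtain p q where pq: "p \<in> K" "q \<in> K" "p \<noteq> q" "w = midpoint p q" using w unfolding mids_def by blast
  obtain c where Kc: "K = {p',q',c}" "c \<noteq> p'" "c \<noteq> q'" using tri_third[OF tK pq'(1,2,3)] .
  have hz: "lamK K r z = ((if r = p' then 1 else 0) + (if r = q' then 1 else 0)) / 2" for r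
    unfolding pq'(4) by (rule tri_mid[OF tK pq'(1,2)])
  have hw: "lamK K r w = ((if r = p then 1 else 0) + (if r = q then 1 else 0)) / 2" for r
    unfolding pq(4) by (rule tri_mid[OF tK pq(1,2)])
  have zp: "lamK K p' z = 1/2" "lamK K q' z = 1/2" "lamK K c z = 0"
    unfolding hz using pq'(3) Kc by auto
  have "phi K w = (4 * lamK K p' z - 1) * lamK K p' w + (4 * lamK K q' z - 1) * lamK K q' w + (4 * lamK K c z - 1) * lamK K c w"
    unfolding phi_def using True Kc pq'(3) by (simp add: algebra_simps)
  also have "\<dots> = lamK K p' w + lamK K q' w - lamK K c w" unfolding zp by simp
  finally have val: "phi K w = lamK K p' w + lamK K q' w - lamK K c w" .
  show ?thesis
  proof (cases "w = z")
    case True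
    have "lamK K p' z + lamK K q' z - lamK K c z = 1" using zp by simp
    then show ?thesis using val True by simp
  next
    case False
    have "c = p \<or> c = q"
    proof (rule ccontr)
      assume "\<not> (c = p \<or> c = q)"
      then have "p \<in> {p',q'}" "q \<in> {p',q'}" using pq(1,2) Kc(1) by auto
      then have "w = z" using pq(3,4) pq'(4) by (auto simp: midpoint_sym)
      then show False using False by simp
    qed
    then have "lamK K p' w + lamK K q' w - lamK K c w = 0"
      unfolding hw using pq(1-3) Kc pq'(3) by auto
    then show ?thesis using val False by simp
  qed
qed

lemma phi_Vnc: "phi \<in> Vnc Th Om"
  unfolding Vnc_def
proof (intro CollectI conjI ballI allI impI)
  fix K assume K: "K \<in> Th"
  then obtain w \<beta> where "\<And>x. phi K x = inner w x + \<beta>" using phi_aff unfolding affine_fun_def by blast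
  then show "\<exists>w \<beta>. \<forall>x\<in>convex hull K. phi K x = inner w x + \<beta>" by blast
next
  fix K1 K2 y assume "K1 \<in> Th" "K2 \<in> Th" "y \<in> mids K1 \<and> y \<in> mids K2"
  then show "phi K1 y = phi K2 y" using phi_mid by auto
next
  fix K y assume "K \<in> Th" "y \<in> mids K" "y \<notin> Om"
  then show "phi K y = 0" using phi_mid zOm by auto
qed

lemma ncval_mid:
  assumes "w \<in> all_mids Th"
  shows "ncval Th v w = v (SOME K. K \<in> Th \<and> w \<in> mids K) w"
    and "(SOME K. K \<in> Th \<and> w \<in> mids K) \<in> Th \<and> w \<in> mids (SOME K. K \<in> Th \<and> w \<in> mids K)"
proof -
  have "\<exists>K. K \<in> Th \<and> w \<in> mids K" using assms unfolding all_mids_def by blast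
  then show "(SOME K. K \<in> Th \<and> w \<in> mids K) \<in> Th \<and> w \<in> mids (SOME K. K \<in> Th \<and> w \<in> mids K)"
    by (rule someI_ex)
qed (simp add: ncval_def)

lemma ncval_phi: "w \<in> all_mids Th \<Longrightarrow> ncval Th phi w = (if w = z then 1 else 0)"
  using ncval_mid(1)[of w phi] ncval_mid(2)[of w] phi_mid by auto

lemma Pi_phi: "Pi_h Th Om phi = psi0"
proof
  fix x
  have fin: "finite (int_mids Th Om)" using finite_all_mids unfolding int_mids_def by simp
  have "Pi_h Th Om phi x = (\<Sum>w\<in>int_mids Th Om. (if w = z then psi Th Om w x else 0))"
    unfolding Pi_h_def by (intro sum.cong refl) (simp add: ncval_phi int_mids_def)
  also have "\<dots> = psi Th Om z x" using fin z_int by simp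
  finally show "Pi_h Th Om phi x = psi0 x" using psi_eq by simp
qed

definition "Sm = (\<Sum>K\<in>Th. (if z \<in> mids K then measure lebesgue (convex hull K) / 3 else 0))"

lemma Sm_pos: "Sm > 0"
  unfolding Sm_def
  using finTh K0 z_mids tri_measure_pos[OF triK[OF K0]] tri_measure_pos triK
  by (intro sum_pos2[of Th K0]) (auto intro: less_imp_le)

lemma ip_phi:
  assumes sig: "sg \<in> Vnc Th Om"
  shows "ip_h Th sg phi = ncval Th sg z * Sm"
proof -
  have cons: "sg K z = ncval Th sg z" if "K \<in> Th" "z \<in> mids K" for K
  proof -
    have "sg K z = sg (SOME K. K \<in> Th \<and> z \<in> mids K) z"
      using sig ncval_mid(2)[OF z_all_mids] that unfolding Vnc_def by blast
    then show ?thesis using ncval_mid(1)[OF z_all_mids] by simp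
  qed
  have inner: "(\<Sum>w\<in>mids K. sg K w * phi K w) = (if z \<in> mids K then ncval Th sg z else 0)"
    if K: "K \<in> Th" for K
  proof -
    have fin: "finite (mids K)" using finite_mids tri_finite triK K by blast
    have "(\<Sum>w\<in>mids K. sg K w * phi K w) = (\<Sum>w\<in>mids K. sg K w * (if w = z then 1 else 0))"
      using phi_mid[OF K] by (intro sum.cong) auto
    also have "\<dots> = (if z \<in> mids K then sg K z else 0)" using fin by (simp add: if_distrib cong: if_cong)
    finally show ?thesis using cons K by simp
  qed
  have "ip_h Th sg phi = (\<Sum>K\<in>Th. measure lebesgue (convex hull K) / 3 * (if z \<in> mids K then ncval Th sg z else 0))"
    unfolding ip_h_def by (intro sum.cong refl) (simp add: inner)
  also have "\<dots> = ncval Th sg z * Sm" unfolding Sm_def sum_distrib_left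
    by (intro sum.cong refl) simp
  finally show ?thesis .
qed

lemma bilin_scale: "bilin_a Om u (\<lambda>x. t * psi0 x) = t * bilin_a Om u psi0"
proof -
  have "integral Om (grad_inner u (\<lambda>x. t * psi0 x)) = integral Om (\<lambda>x. t * grad_inner u psi0 x)"
  proof (rule integral_spike[OF negl_N])
    fix x assume x: "x \<in> Om - Nf"
    have "frechet_derivative (\<lambda>y. t * psi0 y) (at x) = (\<lambda>h. t * frechet_derivative psi0 (at x) h)"
      using frech_scale psi0_diff x by blast
    then show "t * grad_inner u psi0 x = grad_inner u (\<lambda>x. t * psi0 x) x"
      unfolding grad_inner_def by (simp add: sum_distrib_left algebra_simps)
  qed
  also have "\<dots> = t * integral Om (grad_inner u psi0)"
    using integral_cmul[of Om t "grad_inner u psi0"] by simp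
  finally show ?thesis unfolding bilin_a_def .
qed

end


context zsetup begin

lemma VI_dir:
  assumes u_K: "u \<in> Kh Th Om chi"
    and u_VI: "\<forall>v\<in>Kh Th Om chi. bilin_a Om u (\<lambda>x. v x - u x) \<ge> L2ip Om f (\<lambda>x. v x - u x)"
    and t: "u z + t \<ge> chi z"
  shows "t * bilin_a Om u psi0 \<ge> t * L2ip Om f psi0"
proof -
  define v where "v x = u x + t * psi0 x" for x
  have uV: "u \<in> Vh Th Om" using u_K unfolding Kh_def by blast
  have "v \<in> Vh Th Om"
    unfolding Vh_def
  proof (intro CollectI conjI allI impI ballI)
    show "continuous_on UNIV v" unfolding v_def using uV psi0_cont unfolding Vh_def
      by (intro continuous_intros) auto
  next
    fix x assume "x \<notin> Om"
    then show "v x = 0" unfolding v_def using uV psi0_out unfolding Vh_def by auto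
  next
    fix K assume K: "K \<in> Th"
    show "is_P2_on (convex hull K) v" unfolding v_def
      using uV K psi0_P2 unfolding Vh_def by (intro P2_lin) auto
  qed
  moreover have "\<forall>y\<in>all_mids Th. v y \<ge> chi y"
  proof
    fix y assume y: "y \<in> all_mids Th"
    show "v y \<ge> chi y"
    proof (cases "y = z")
      case True then show ?thesis unfolding v_def using t psi0_z by simp
    next
      case False then show ?thesis unfolding v_def using psi0_mid y u_K unfolding Kh_def by auto
    qed
  qed
  ultimately have "v \<in> Kh Th Om chi" unfolding Kh_def by blast
  then have "bilin_a Om u (\<lambda>x. v x - u x) \<ge> L2ip Om f (\<lambda>x. v x - u x)" using u_VI by blast
  moreover have "(\<lambda>x. v x - u x) = (\<lambda>x. t * psi0 x)" unfolding v_def by simp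
  ultimately show ?thesis using bilin_scale L2_scale by metis
qed

lemma main_z:
  assumes u_K: "u \<in> Kh Th Om chi"
    and u_VI: "\<forall>v\<in>Kh Th Om chi. bilin_a Om u (\<lambda>x. v x - u x) \<ge> L2ip Om f (\<lambda>x. v x - u x)"
    and sg_nc: "sg \<in> Vnc Th Om"
    and sg_def: "\<forall>v\<in>Vnc Th Om. ip_h Th sg v = L2ip Om f (Pi_h Th Om v) - bilin_a Om u (Pi_h Th Om v)"
  shows "ncval Th sg z \<le> 0 \<and> (u z > chi z \<longrightarrow> ncval Th sg z = 0)"
proof -
  have E: "ncval Th sg z * Sm = L2ip Om f psi0 - bilin_a Om u psi0"
    using sg_def phi_Vnc ip_phi[OF sg_nc] Pi_phi by metis
  have uz: "u z \<ge> chi z" using u_K z_all_mids unfolding Kh_def by blast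
  have "1 * bilin_a Om u psi0 \<ge> 1 * L2ip Om f psi0"
    using VI_dir[OF u_K u_VI, of 1] uz by simp
  then have "ncval Th sg z * Sm \<le> 0" using E by simp
  then have le: "ncval Th sg z \<le> 0" using Sm_pos by (simp add: mult_le_0_iff)
  moreover have "ncval Th sg z = 0" if gt: "u z > chi z"
  proof -
    have "(chi z - u z) * bilin_a Om u psi0 \<ge> (chi z - u z) * L2ip Om f psi0"
      using VI_dir[OF u_K u_VI, of "chi z - u z"] by simp
    then have "bilin_a Om u psi0 \<le> L2ip Om f psi0" using gt by (simp add: mult_le_cancel_left)
    then have "ncval Th sg z * Sm \<ge> 0" using E by simp
    then have "ncval Th sg z \<ge> 0" using Sm_pos by (simp add: zero_le_mult_iff)
    then show ?thesis using le by simp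
  qed
  ultimately show ?thesis by blast
qed

end

theorem lemma3p2:
  fixes Th :: "pt set set" and Om :: "pt set"
    and f chi u :: "pt \<Rightarrow> real" and sigma :: "pt set \<Rightarrow> pt \<Rightarrow> real"
  assumes tri: "conforming_triangulation Th Om"
    and dom: "connected Om"
    and f: "in_L2 Om f"
    and chi_cont: "continuous_on (closure Om) chi"
    and chi_H1: "in_H1 Om chi"
    and chi_bd: "\<forall>x\<in>frontier Om. chi x \<le> 0"
    and u_K: "u \<in> Kh Th Om chi"
    and u_VI: "\<forall>v\<in>Kh Th Om chi.
                 bilin_a Om u (\<lambda>x. v x - u x) \<ge> L2ip Om f (\<lambda>x. v x - u x)"
    and sigma_nc: "sigma \<in> Vnc Th Om"
    and sigma_def: "\<forall>v\<in>Vnc Th Om.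
                 ip_h Th sigma v = L2ip Om f (Pi_h Th Om v) - bilin_a Om u (Pi_h Th Om v)"
  shows "\<forall>z\<in>int_mids Th Om. ncval Th sigma z \<le> 0 \<and>
                              (u z > chi z \<longrightarrow> ncval Th sigma z = 0)"
proof
  fix z assume z: "z \<in> int_mids Th Om"
  then obtain K0 a b where K0: "K0 \<in> Th" "a \<in> K0" "b \<in> K0" "a \<noteq> b" "z = midpoint a b" "z \<in> Om"
    unfolding int_mids_def all_mids_def mids_def by blast
  interpret zsetup Th Om z a b K0
    using tri K0 by unfold_locales auto
  show "ncval Th sigma z \<le> 0 \<and> (u z > chi z \<longrightarrow> ncval Th sigma z = 0)"
    using main_z[OF u_K u_VI sigma_nc sigma_def] .
qed


end
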